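(* Let $\mathcal{D}$ be a dyadic grid, $j\in\mathbb{N}$, and let $f,g$ be functions supported in a cube $Q_0\in\mathcal{D}$ with $f,g\in L^\infty$. Define \[ B_j^{\mathcal{D}}\restriction_{Q_0^\complement}(g,f)=\int_{\mathbb{R}^d\setminus Q_0}\sum_{K\in\mathcal{D}}\langle|g|\rangle_{3K}\sum_{\substack{P\in\mathcal{D},\,P\subset 3K\\ \ell P=2^{-j}\ell K}}\frac{\langle f,h_P\rangle^2}{|P|}\mathbf{1}_P(x)\,\mathrm{d}x. \] Then $B_j^{\mathcal{D}}\restriction_{Q_0^\complement}(g,f)\lesssim_d 2^{-jd}\langle|g|\rangle_{Q_0}\langle|f|\rangle_{Q_0}^2|Q_0|$.
   Context: A dyadic grid is the standard grid $\bigcup_j\{2^{-j}([0,1)^d+m):m\in\mathbb{Z}^d\}$ or a translate of it by $\omega\in(\{0,1\}^d)^{\mathbb{Z}}$ as in the construction $R\mapsto R+\sum_{i>j}\omega_i2^{-i}$ for $\ell R=2^{-j}$. $3K$ is the cube concentric with $K$ of side $3\ell K$; $\langle u\rangle_Q=|Q|^{-1}\int_Qu$. For a dyadic cube $P=P_1\times\dots\times P_d$, the Haar functions are $h_P^\epsilon=\prod_i h_{P_i}^{\epsilon_i}$, $\epsilon\in\{0,1\}^d\setminus\{0\}^d$, where $h_I^0=|I|^{-1/2}\mathbf{1}_I$ and $h_I^1=|I|^{-1/2}(\mathbf{1}_{I^-}-\mathbf{1}_{I^+})$ with $I^\pm$ the dyadic halves of $I$; $\langle f,h_P\rangle^2$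 means $\sum_\epsilon\langle f,h_P^\epsilon\rangle^2$. *)

theory Defs
  imports "HOL-Analysis.Analysis"
begin

text \<open>A cube is represented by its lower corner and its side length:
  (a, s) stands for the half-open cube a + [0,s)^d.\<close>
type_synonym 'n cube = "(real^'n) \<times> real"

definition cube_set :: "'n::finite cube \<Rightarrow> (real^'n) set" where
  "cube_set Q = {x. \<forall>i. fst Q $ i \<le> x $ i \<and> x $ i < fst Q $ i + snd Q}"

definition side :: "'n::finite cube \<Rightarrow> real" where
  "side Q = snd Q"

definition vol :: "'n::finite cube \<Rightarrow> real" where
  "vol Q = snd Q ^ CARD('n)"

definition triple :: "'n::finite cube \<Rightarrow> 'n cube" where
  "triple Q = (fst Q - (\<chi> i. snd Q), 3 * snd Q)"

text \<open>Shift of the translated dyadic grid at scale 2^(-j): sum_{i>j} omega_i 2^(-i).\<close>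
definition grid_shift :: "(int \<Rightarrow> 'n::finite \<Rightarrow> bool) \<Rightarrow> int \<Rightarrow> real^'n" where
  "grid_shift \<omega> j = (\<chi> i. (\<Sum>k. (if \<omega> (j + 1 + int k) i then 1 else 0) * 2 powr (- real_of_int (j + 1 + int k))))"

text \<open>The dyadic grid D_omega; omega = (\<lambda>_ _. False) gives the standard grid.\<close>
definition dyadic_grid :: "(int \<Rightarrow> 'n::finite \<Rightarrow> bool) \<Rightarrow> 'n cube set" where
  "dyadic_grid \<omega> = {(2 powr (- real_of_int j) *\<^sub>R (\<chi> i. real_of_int (m $ i)) + grid_shift \<omega> j,
                        2 powr (- real_of_int j)) | j (m :: int^'n). True}"

definition haar1 :: "bool \<Rightarrow> real \<Rightarrow> real \<Rightarrow> real \<Rightarrow> real" where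
  "haar1 e a s t = (if e
     then s powr (-1/2) * (indicator {a..<a + s/2} t - indicator {a + s/2..<a + s} t)
     else s powr (-1/2) * indicator {a..<a + s} t)"

definition haar :: "'n::finite cube \<Rightarrow> ('n \<Rightarrow> bool) \<Rightarrow> real^'n \<Rightarrow> real" where
  "haar P \<epsilon> x = (\<Prod>i\<in>UNIV. haar1 (\<epsilon> i) (fst P $ i) (snd P) (x $ i))"

text \<open>\<langle>f,h_P\<rangle>^2 = sum over epsilon \<noteq> 0 of \<langle>f,h_P^epsilon\<rangle>^2.\<close>
definition haar_sq :: "(real^'n \<Rightarrow> real) \<Rightarrow> 'n::finite cube \<Rightarrow> real" where
  "haar_sq f P = (\<Sum>\<epsilon>\<in>{\<epsilon>. \<epsilon> \<noteq> (\<lambda>_. False)}. (\<integral>x. f x * haar P \<epsilon> x \<partial>lborel)^2)"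

definition avg_abs :: "(real^'n \<Rightarrow> real) \<Rightarrow> 'n::finite cube \<Rightarrow> ennreal" where
  "avg_abs u Q = (\<integral>\<^sup>+ x\<in>cube_set Q. ennreal \<bar>u x\<bar> \<partial>lborel) / ennreal (vol Q)"

definition B_out :: "(int \<Rightarrow> 'n::finite \<Rightarrow> bool) \<Rightarrow> nat \<Rightarrow> 'n cube
     \<Rightarrow> (real^'n \<Rightarrow> real) \<Rightarrow> (real^'n \<Rightarrow> real) \<Rightarrow> ennreal" where
  "B_out \<omega> j Q0 g f =
     (\<integral>\<^sup>+ x\<in>UNIV - cube_set Q0.
        (\<Sum>\<^sub>\<infinity>K\<in>dyadic_grid \<omega>.
           avg_abs g (triple K) *
           (\<Sum>\<^sub>\<infinity>P\<in>{P\<in>dyadic_grid \<omega>. cube_set P \<subseteq> cube_set (triple K)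
                               \<and> side P = (1/2)^j * side K}.
              ennreal (haar_sq f P / vol P) * indicator (cube_set P) x)) \<partial>lborel)"

end

theory Submission
  imports Defs
begin


lemma ennreal_summable_on[simp]: "(f :: 'a \<Rightarrow> ennreal) summable_on A"
  by (rule nonneg_summable_on_complete) simp

lemma countable_chain_finite:
  assumes "countable A"
  obtains F :: "nat \<Rightarrow> 'a set" where "incseq F" "\<And>n. finite (F n)" "\<And>n. F n \<subseteq> A"
    "\<And>X. finite X \<Longrightarrow> X \<subseteq> A \<Longrightarrow> \<exists>n. X \<subseteq> F n"
proof (cases "A = {}")
  case True
  show ?thesis by (rule that[of "\<lambda>_. {}"]) (use True in auto)
next
  case False
  define F where "F n = from_nat_into A ` {..<n}" for n
  show ?thesis
  proof (rule that[of F])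
    show "incseq F" unfolding F_def incseq_def by auto
    show "finite (F n)" for n unfolding F_def by auto
    show "F n \<subseteq> A" for n unfolding F_def using False by (auto intro: from_nat_into)
    show "\<exists>n. X \<subseteq> F n" if "finite X" "X \<subseteq> A" for X
    proof (intro exI[of _ "Suc (\<Sum>x\<in>X. to_nat_on A x)"] subsetI)
      fix x assume x: "x \<in> X"
      have "to_nat_on A x \<le> (\<Sum>x\<in>X. to_nat_on A x)"
        using that x by (intro member_le_sum) auto
      moreover have "x = from_nat_into A (to_nat_on A x)"
        using x that assms by (simp add: from_nat_into_to_nat_on subsetD)
      ultimately show "x \<in> F (Suc (\<Sum>x\<in>X. to_nat_on A x))"
        unfolding F_def by (auto intro!: image_eqI[of x])
    qed
  qed
qed

lemma infsum_ennreal_SUP_chain: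
  fixes g :: "'a \<Rightarrow> ennreal"
  assumes "\<And>n. finite (F n)" "\<And>n. F n \<subseteq> A" "\<And>X. finite X \<Longrightarrow> X \<subseteq> A \<Longrightarrow> \<exists>n. X \<subseteq> F n"
  shows "infsum g A = (SUP n. sum g (F n))"
proof -
  have "infsum g A = (SUP X\<in>{X. finite X \<and> X \<subseteq> A}. sum g X)"
    by (rule nonneg_infsum_complete) auto
  also have "\<dots> = (SUP n. sum g (F n))"
  proof (rule antisym)
    show "(SUP X\<in>{X. finite X \<and> X \<subseteq> A}. sum g X) \<le> (SUP n. sum g (F n))"
    proof (rule SUP_least)
      fix X assume "X \<in> {X. finite X \<and> X \<subseteq> A}"
      then obtain n where "X \<subseteq> F n" "finite X" using assms(3) by blast
      then have "sum g X \<le> sum g (F n)" using assms(1) by (intro sum_mono2) auto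
      also have "\<dots> \<le> (SUP n. sum g (F n))" by (rule SUP_upper) auto
      finally show "sum g X \<le> (SUP n. sum g (F n))" .
    qed
    show "(SUP n. sum g (F n)) \<le> (SUP X\<in>{X. finite X \<and> X \<subseteq> A}. sum g X)"
      by (rule SUP_least, rule SUP_upper) (use assms in auto)
  qed
  finally show ?thesis .
qed

lemma nn_integral_infsum:
  fixes f :: "'a \<Rightarrow> 'b \<Rightarrow> ennreal"
  assumes "countable A" "\<And>a. a \<in> A \<Longrightarrow> f a \<in> borel_measurable M"
  shows "(\<lambda>x. infsum (\<lambda>a. f a x) A) \<in> borel_measurable M"
    and "(\<integral>\<^sup>+ x. infsum (\<lambda>a. f a x) A \<partial>M) = infsum (\<lambda>a. \<integral>\<^sup>+ x. f a x \<partial>M) A"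
proof -
  obtain F where F: "incseq F" "\<And>n. finite (F n)" "\<And>n. F n \<subseteq> A"
    "\<And>X. finite X \<Longrightarrow> X \<subseteq> A \<Longrightarrow> \<exists>n. X \<subseteq> F n"
    using countable_chain_finite[OF assms(1)] by metis
  have eq: "infsum (\<lambda>a. f a x) A = (SUP n. sum (\<lambda>a. f a x) (F n))" for x
    by (rule infsum_ennreal_SUP_chain) (use F in auto)
  have meas: "(\<lambda>x. sum (\<lambda>a. f a x) (F n)) \<in> borel_measurable M" for n
    using F(3) assms(2) by (intro borel_measurable_sum) auto
  show "(\<lambda>x. infsum (\<lambda>a. f a x) A) \<in> borel_measurable M"
    unfolding eq using meas by measurable
  have inc: "incseq (\<lambda>n x. sum (\<lambda>a. f a x) (F n))"
    using F(1,2) unfolding incseq_def le_fun_def by (auto intro!: sum_mono2)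
  have "(\<integral>\<^sup>+ x. infsum (\<lambda>a. f a x) A \<partial>M) = (\<integral>\<^sup>+ x. (SUP n. sum (\<lambda>a. f a x) (F n)) \<partial>M)"
    unfolding eq ..
  also have "\<dots> = (SUP n. \<integral>\<^sup>+ x. sum (\<lambda>a. f a x) (F n) \<partial>M)"
    using nn_integral_monotone_convergence_SUP[OF inc meas] by (simp add: image_comp)
  also have "\<dots> = (SUP n. sum (\<lambda>a. \<integral>\<^sup>+ x. f a x \<partial>M) (F n))"
    using F(2,3) assms(2) by (intro SUP_cong refl nn_integral_sum) auto
  also have "\<dots> = infsum (\<lambda>a. \<integral>\<^sup>+ x. f a x \<partial>M) A"
    by (rule infsum_ennreal_SUP_chain[symmetric]) (use F in auto)
  finally show "(\<integral>\<^sup>+ x. infsum (\<lambda>a. f a x) A \<partial>M) = infsum (\<lambda>a. \<integral>\<^sup>+ x. f a x \<partial>M) A" .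
qed

lemma ennreal_sum_le_infsum:
  fixes g :: "'a \<Rightarrow> ennreal"
  assumes "finite F" "F \<subseteq> A"
  shows "sum g F \<le> infsum g A"
proof -
  have "sum g F \<le> (SUP X\<in>{X. finite X \<and> X \<subseteq> A}. sum g X)"
    by (rule SUP_upper) (use assms in auto)
  also have "\<dots> = infsum g A" by (rule nonneg_infsum_complete[symmetric]) simp
  finally show ?thesis .
qed

lemma infsum_prod_le:
  fixes f :: "'a \<times> 'b \<Rightarrow> ennreal"
  shows "infsum f UNIV \<le> infsum (\<lambda>a. infsum (\<lambda>b. f (a, b)) UNIV) UNIV"
proof -
  have "infsum f UNIV = (SUP X\<in>{X. finite X \<and> X \<subseteq> UNIV}. sum f X)"
    by (rule nonneg_infsum_complete) simp
  also have "\<dots> \<le> infsum (\<lambda>a. infsum (\<lambda>b. f (a, b)) UNIV) UNIV"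
  proof (rule SUP_least)
    fix X :: "('a \<times> 'b) set" assume "X \<in> {X. finite X \<and> X \<subseteq> UNIV}"
    then have X: "finite X" by simp
    have "sum f X \<le> sum f (fst ` X \<times> snd ` X)"
      using X by (intro sum_mono2) (auto, force+)
    also have "\<dots> = (\<Sum>a\<in>fst ` X. \<Sum>b\<in>snd ` X. f (a, b))"
      using sum.cartesian_product[of "\<lambda>a b. f (a, b)" "snd ` X" "fst ` X"] by simp
    also have "\<dots> \<le> (\<Sum>a\<in>fst ` X. infsum (\<lambda>b. f (a, b)) UNIV)"
      using X by (intro sum_mono ennreal_sum_le_infsum) auto
    also have "\<dots> \<le> infsum (\<lambda>a. infsum (\<lambda>b. f (a, b)) UNIV) UNIV"
      using X by (intro ennreal_sum_le_infsum) auto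
    finally show "sum f X \<le> infsum (\<lambda>a. infsum (\<lambda>b. f (a, b)) UNIV) UNIV" .
  qed
  finally show ?thesis .
qed
lemma infsum_cmult_ennreal:
  fixes f :: "'a \<Rightarrow> ennreal"
  shows "infsum (\<lambda>x. c * f x) A = c * infsum f A"
proof -
  have "infsum (\<lambda>x. c * f x) A = (SUP F\<in>{F. finite F \<and> F \<subseteq> A}. sum (\<lambda>x. c * f x) F)"
    by (rule nonneg_infsum_complete) simp
  also have "\<dots> = (SUP F\<in>{F. finite F \<and> F \<subseteq> A}. c * sum f F)"
    by (simp add: sum_distrib_left)
  also have "\<dots> = c * (SUP F\<in>{F. finite F \<and> F \<subseteq> A}. sum f F)"
    by (rule SUP_mult_left_ennreal[symmetric])
  also have "(SUP F\<in>{F. finite F \<and> F \<subseteq> A}. sum f F) = infsum f A"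
    by (rule nonneg_infsum_complete[symmetric]) simp
  finally show ?thesis .
qed



lemma card_int_box:
  fixes T :: "'n::finite \<Rightarrow> int set"
  assumes "\<And>i. finite (T i)" "\<And>i. card (T i) \<le> N"
  shows "finite {m::int^'n. \<forall>i. m$i \<in> T i}" "card {m::int^'n. \<forall>i. m$i \<in> T i} \<le> N ^ CARD('n)"
proof -
  have eq: "{m::int^'n. \<forall>i. m$i \<in> T i} = vec_lambda ` (PiE UNIV T)"
  proof (intro set_eqI iffI)
    fix m :: "int^'n" assume "m \<in> {m::int^'n. \<forall>i. m$i \<in> T i}"
    then show "m \<in> vec_lambda ` (PiE UNIV T)"
      by (intro image_eqI[of _ _ "vec_nth m"]) (auto simp: vec_nth_inverse)
  qed auto
  have fin: "finite (PiE UNIV T)" using assms(1) by (intro finite_PiE) auto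
  show "finite {m::int^'n. \<forall>i. m$i \<in> T i}" unfolding eq using fin by simp
  have "card {m::int^'n. \<forall>i. m$i \<in> T i} \<le> card (PiE UNIV T)"
    unfolding eq by (rule card_image_le[OF fin])
  also have "\<dots> = (\<Prod>i\<in>UNIV. card (T i))" by (rule card_PiE) auto
  also have "\<dots> \<le> (\<Prod>i\<in>(UNIV::'n set). N)" by (intro prod_mono) (use assms in auto)
  also have "\<dots> = N ^ CARD('n)" by simp
  finally show "card {m::int^'n. \<forall>i. m$i \<in> T i} \<le> N ^ CARD('n)" .
qed

lemma count_cells:
  fixes c b :: "real^'n::finite" and L W w :: real
  assumes L: "L > 0" and N: "w + W \<le> real N * L"
  defines "S \<equiv> {m::int^'n. \<exists>x::real^'n. (\<forall>i. c$i + L * of_int (m$i) \<le> x$i \<and> x$i < c$i + L * of_int (m$i) + W)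
                  \<and> (\<forall>i. b$i \<le> x$i \<and> x$i < b$i + w)}"
  shows "finite S" "card S \<le> N ^ CARD('n)"
proof -
  define u where "u i = (b$i - c$i - W) / L" for i
  define T where "T i = {\<lfloor>u i\<rfloor> + 1 .. \<lfloor>u i\<rfloor> + int N}" for i
  have sub: "S \<subseteq> {m::int^'n. \<forall>i. m$i \<in> T i}"
  proof
    fix m assume "m \<in> S"
    then obtain x where x: "\<And>i. c$i + L * of_int (m$i) \<le> x$i" "\<And>i. x$i < c$i + L * of_int (m$i) + W"
       "\<And>i. b$i \<le> x$i" "\<And>i. x$i < b$i + w" unfolding S_def by blast
    have "m$i \<in> T i" for i
    proof -
      have "b$i - c$i - W < L * of_int (m$i)" using x(2,3)[of i] by linarith
      then have "u i < of_int (m$i)" unfolding u_def using L by (simp add: divide_less_eq mult.commute)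
      then have 1: "\<lfloor>u i\<rfloor> + 1 \<le> m$i" by linarith
      have "L * of_int (m$i) < b$i + w - c$i" using x(1,4)[of i] by linarith
      also have "\<dots> \<le> b$i - c$i - W + real N * L" using N by linarith
      finally have "of_int (m$i) < u i + real N" unfolding u_def using L
        by (simp add: field_simps)
      then have 2: "m$i \<le> \<lfloor>u i\<rfloor> + int N" by linarith
      show ?thesis using 1 2 unfolding T_def by auto
    qed
    then show "m \<in> {m::int^'n. \<forall>i. m$i \<in> T i}" by auto
  qed
  have "finite {m::int^'n. \<forall>i. m$i \<in> T i}" "card {m::int^'n. \<forall>i. m$i \<in> T i} \<le> N ^ CARD('n)"
    using card_int_box[of T N] by (auto simp: T_def)
  then show "finite S" "card S \<le> N ^ CARD('n)"
    using sub by (auto intro: finite_subset card_mono order_trans)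
qed



lemma two_powr_split: "(2::real) powr (- real_of_int (J0 + 1 + int k)) = 2 powr (- real_of_int (J0 + int n)) * 2 ^ (n - 1 - k)"
  if "k < n" for J0 :: int and k n :: nat
proof -
  have "(2::real) ^ (n - 1 - k) = 2 powr (real (n - 1 - k))" by (simp add: powr_realpow)
  then have "2 powr (- real_of_int (J0 + int n)) * (2::real) ^ (n - 1 - k) = 2 powr (- real_of_int (J0 + int n) + real (n - 1 - k))"
    by (simp add: powr_add)
  also have "- real_of_int (J0 + int n) + real (n - 1 - k) = - real_of_int (J0 + 1 + int k)"
    using that by (simp add: of_nat_diff)
  finally show ?thesis by simp
qed

lemma grid_shift_diff:
  assumes "J0 \<le> J"
  shows "\<exists>t::int. grid_shift \<omega> J0 $ i = grid_shift \<omega> J $ i + 2 powr (- real_of_int J) * of_int t"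
proof -
  obtain n where n: "J = J0 + int n" using assms by (metis zle_iff_zadd)
  define a where "a k = (if \<omega> (J0 + 1 + int k) i then 1 else 0) * (2::real) powr (- real_of_int (J0 + 1 + int k))" for k :: nat
  have "summable (\<lambda>k. (2::real) powr (- real_of_int (J0 + 1)) * (1/2)^k)"
    by (intro summable_mult summable_geometric) auto
  moreover have "norm (a k) \<le> (2::real) powr (- real_of_int (J0 + 1)) * (1/2)^k" for k
  proof -
    have "(2::real) powr (- real_of_int (J0 + 1 + int k)) = 2 powr (- real_of_int (J0 + 1)) * 2 powr (- real k)"
      by (simp add: powr_add[symmetric])
    also have "(2::real) powr (- real k) = (1/2)^k"
      by (simp add: powr_minus powr_realpow power_one_over inverse_eq_divide)
    finally show ?thesis unfolding a_def by auto
  qed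
  ultimately have sa: "summable a" by (rule summable_comparison_test'[where N=0])
  have g0: "grid_shift \<omega> J0 $ i = suminf a" unfolding grid_shift_def a_def by simp
  have g1: "grid_shift \<omega> J $ i = (\<Sum>k. a (k + n))" unfolding grid_shift_def a_def n
    by (simp add: algebra_simps)
  have "sum a {..<n} = 2 powr (- real_of_int J) * of_int (\<Sum>k<n. if \<omega> (J0 + 1 + int k) i then 2 ^ (n - 1 - k) else 0)"
  proof -
    have "a k = 2 powr (- real_of_int J) * of_int (if \<omega> (J0 + 1 + int k) i then 2 ^ (n - 1 - k) else 0)"
      if "k < n" for k
      using two_powr_split[OF that, of J0] unfolding a_def n by simp
    then show ?thesis unfolding of_int_sum sum_distrib_left by (intro sum.cong refl) auto
  qed
  moreover have "suminf a = (\<Sum>k. a (k + n)) + sum a {..<n}" by (rule suminf_split_initial_segment[OF sa])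
  ultimately have "grid_shift \<omega> J0 $ i = grid_shift \<omega> J $ i + 2 powr (- real_of_int J) * of_int (\<Sum>k<n. if \<omega> (J0 + 1 + int k) i then 2 ^ (n - 1 - k) else 0)"
    using g0 g1 by simp
  then show ?thesis by blast
qed

definition cell :: "(int \<Rightarrow> 'n::finite \<Rightarrow> bool) \<Rightarrow> int \<Rightarrow> int^'n \<Rightarrow> 'n cube" where
  "cell \<omega> J m = (2 powr (- real_of_int J) *\<^sub>R (\<chi> i. real_of_int (m $ i)) + grid_shift \<omega> J, 2 powr (- real_of_int J))"

lemma dyadic_grid_cell: "dyadic_grid \<omega> = (\<lambda>(J, m). cell \<omega> J m) ` UNIV"
  unfolding dyadic_grid_def cell_def by auto

lemma cell_inj: "inj (\<lambda>(J, m). cell \<omega> J m)"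
proof (rule injI, clarsimp)
  fix J m J' m' assume eq: "cell \<omega> J m = cell \<omega> J' m'"
  then have "(2::real) powr (- real_of_int J) = 2 powr (- real_of_int J')" unfolding cell_def by simp
  then have J: "J = J'" by (simp add: powr_inj)
  with eq have "(2 powr (- real_of_int J)) *\<^sub>R (\<chi> i. real_of_int (m $ i)) = (2 powr (- real_of_int J)) *\<^sub>R (\<chi> i. real_of_int (m' $ i))"
    unfolding cell_def by simp
  then have "(\<chi> i. real_of_int (m $ i)) = (\<chi> i. real_of_int (m' $ i))" by simp
  then have "m = m'" by (metis (mono_tags, lifting) of_int_eq_iff vec_eq_iff vec_lambda_beta)
  with J show "J = J' \<and> m = m'" by simp
qed

lemma cube_set_cell: "x \<in> cube_set (cell \<omega> J m) \<longleftrightarrow>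
   (\<forall>i. 2 powr (- real_of_int J) * m$i + grid_shift \<omega> J $ i \<le> x$i \<and>
        x$i < 2 powr (- real_of_int J) * m$i + grid_shift \<omega> J $ i + 2 powr (- real_of_int J))"
  unfolding cube_set_def cell_def by simp

lemma cell_nested:
  assumes "J0 \<le> J" "cube_set (cell \<omega> J m) \<inter> cube_set (cell \<omega> J0 m0) \<noteq> {}"
  shows "cube_set (cell \<omega> J m) \<subseteq> cube_set (cell \<omega> J0 m0)"
proof
  obtain n where n: "J = J0 + int n" using assms by (metis zle_iff_zadd)
  define L where "L = (2::real) powr (- real_of_int J)"
  have L: "L > 0" unfolding L_def by simp
  have s0: "(2::real) powr (- real_of_int J0) = L * 2^n"
    unfolding L_def n by (simp add: powr_add[symmetric] powr_realpow[symmetric])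
  obtain x where x: "x \<in> cube_set (cell \<omega> J m)" "x \<in> cube_set (cell \<omega> J0 m0)" using assms by blast
  fix y assume y: "y \<in> cube_set (cell \<omega> J m)"
  have "\<forall>i. 2 powr (- real_of_int J0) * m0$i + grid_shift \<omega> J0 $ i \<le> y$i \<and>
        y$i < 2 powr (- real_of_int J0) * m0$i + grid_shift \<omega> J0 $ i + 2 powr (- real_of_int J0)"
  proof
    fix i
    obtain t where t: "grid_shift \<omega> J0 $ i = grid_shift \<omega> J $ i + L * of_int t"
      using grid_shift_diff[OF assms(1)] unfolding L_def by blast
    define M where "M = m0$i * 2^n + t"
    have Q0: "2 powr (- real_of_int J0) * m0$i + grid_shift \<omega> J0 $ i = L * M + grid_shift \<omega> J $ i"
      unfolding M_def s0 t by (simp add: algebra_simps)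
    have Q1: "2 powr (- real_of_int J0) * m0$i + grid_shift \<omega> J0 $ i + 2 powr (- real_of_int J0) = L * (M + 2^n) + grid_shift \<omega> J $ i"
      using Q0 s0 by (simp add: algebra_simps)
    have xP: "L * m$i + grid_shift \<omega> J $ i \<le> x$i" "x$i < L * (m$i + 1) + grid_shift \<omega> J $ i"
      using x(1) unfolding cube_set_cell L_def by (auto simp: algebra_simps)
    have xQ: "L * M + grid_shift \<omega> J $ i \<le> x$i" "x$i < L * (M + 2^n) + grid_shift \<omega> J $ i"
    proof -
      have h: "2 powr (- real_of_int J0) * m0$i + grid_shift \<omega> J0 $ i \<le> x$i \<and>
        x$i < 2 powr (- real_of_int J0) * m0$i + grid_shift \<omega> J0 $ i + 2 powr (- real_of_int J0)"
        using x(2) unfolding cube_set_cell by blast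
      show "L * M + grid_shift \<omega> J $ i \<le> x$i" "x$i < L * (M + 2^n) + grid_shift \<omega> J $ i"
        using h Q0 Q1 by linarith+
    qed
    have "L * M < L * (m$i + 1)" using xP xQ by linarith
    then have "real_of_int M < real_of_int (m$i + 1)" using L by simp
    then have 1: "M \<le> m$i" by linarith
    have "L * m$i < L * (M + 2^n)" using xP xQ by linarith
    then have "real_of_int (m$i) < real_of_int (M + 2^n)" using L by simp
    then have 2: "m$i + 1 \<le> M + 2^n" by linarith
    have yP: "L * m$i + grid_shift \<omega> J $ i \<le> y$i" "y$i < L * (m$i + 1) + grid_shift \<omega> J $ i"
      using y unfolding cube_set_cell L_def by (auto simp: algebra_simps)
    have "L * M \<le> L * m$i" using 1 L by simp
    moreover have "real_of_int (m$i + 1) \<le> real_of_int (M + 2^n)" using 2 by (simp only: of_int_le_iff)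
    then have "L * (m$i + 1) \<le> L * (M + 2^n)"
      using L by (intro mult_left_mono) auto
    ultimately show "2 powr (- real_of_int J0) * m0$i + grid_shift \<omega> J0 $ i \<le> y$i \<and>
        y$i < 2 powr (- real_of_int J0) * m0$i + grid_shift \<omega> J0 $ i + 2 powr (- real_of_int J0)"
      using Q0 Q1 yP by linarith
  qed
  then show "y \<in> cube_set (cell \<omega> J0 m0)" unfolding cube_set_cell .
qed



lemma cube_set_sets[measurable]: "cube_set Q \<in> sets lborel"
proof -
  have "Measurable.pred lborel (\<lambda>x::real^'a. \<forall>i. fst Q $ i \<le> x $ i \<and> x $ i < fst Q $ i + snd Q)"
    by measurable
  then show ?thesis unfolding cube_set_def Measurable.pred_def by simp
qed

lemma emeasure_cube_le:
  fixes Q :: "'n::finite cube"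
  assumes "snd Q \<ge> 0"
  shows "emeasure lborel (cube_set Q) \<le> ennreal (snd Q ^ CARD('n))"
proof -
  define a where "a = fst Q"
  define b where "b = a + (\<chi> i. snd Q)"
  have sub: "cube_set Q \<subseteq> cbox a b"
    unfolding cube_set_def a_def b_def by (auto simp: mem_box_cart less_imp_le)
  have "a \<in> cbox a b" using assms unfolding b_def by (auto simp: mem_box_cart)
  then have ne: "cbox a b \<noteq> {}" by blast
  have "emeasure lborel (cbox a b) = ennreal (measure lborel (cbox a b))"
    using emeasure_eq_ennreal_measure[of lborel "cbox a b"] emeasure_lborel_cbox_finite[of a b] by simp
  also have "measure lborel (cbox a b) = (\<Prod>i\<in>UNIV. b$i - a$i)" using content_cbox_cart[OF ne] .
  also have "\<dots> = snd Q ^ CARD('n)" unfolding b_def by simp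
  finally have "emeasure lborel (cbox a b) = ennreal (snd Q ^ CARD('n))" .
  with emeasure_mono[OF sub, of lborel] show ?thesis by simp
qed

lemma haar_measurable[measurable]: "haar P \<epsilon> \<in> borel_measurable lborel"
  unfolding haar_def haar1_def by measurable

lemma haar1_zero: "s > 0 \<Longrightarrow> t \<notin> {a..<a+s} \<Longrightarrow> haar1 e a s t = 0"
  unfolding haar1_def by (auto simp: indicator_def)

lemma haar1_bound: "s > 0 \<Longrightarrow> \<bar>haar1 e a s t\<bar> \<le> s powr (-1/2)"
  unfolding haar1_def by (auto simp: indicator_def)

lemma haar_zero:
  assumes "snd P > 0" "x \<notin> cube_set P"
  shows "haar P \<epsilon> x = 0"
proof -
  obtain i where "\<not> (fst P $ i \<le> x $ i \<and> x $ i < fst P $ i + snd P)"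
    using assms(2) unfolding cube_set_def by auto
  then have "haar1 (\<epsilon> i) (fst P $ i) (snd P) (x $ i) = 0" using assms(1) by (intro haar1_zero) auto
  then show ?thesis unfolding haar_def by (intro prod_zero) auto
qed

lemma haar_bound:
  fixes P :: "'n::finite cube"
  assumes "snd P > 0"
  shows "\<bar>haar P \<epsilon> x\<bar> \<le> (snd P powr (-1/2)) ^ CARD('n)"
proof -
  have "\<bar>haar P \<epsilon> x\<bar> = (\<Prod>i\<in>UNIV. \<bar>haar1 (\<epsilon> i) (fst P $ i) (snd P) (x $ i)\<bar>)"
    unfolding haar_def by (simp add: abs_prod)
  also have "\<dots> \<le> (\<Prod>i\<in>(UNIV::'n set). snd P powr (-1/2))"
    by (intro prod_mono) (use haar1_bound[OF assms] in auto)
  also have "\<dots> = (snd P powr (-1/2)) ^ CARD('n)" by simp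
  finally show ?thesis .
qed



lemma bounded_supp_integrable:
  fixes f :: "real^'n::finite \<Rightarrow> real" and Q0 :: "'n cube"
  assumes "f \<in> borel_measurable lborel" "AE x in lborel. \<bar>f x\<bar> \<le> M"
    "\<forall>x. x \<notin> cube_set Q0 \<longrightarrow> f x = 0" "snd Q0 \<ge> 0"
  shows "integrable lborel f"
proof -
  have fin: "emeasure lborel (cube_set Q0) < \<infinity>"
    using emeasure_cube_le[OF assms(4)] by (simp add: le_less_trans)
  have i1: "integrable lborel (\<lambda>x. indicator (cube_set Q0) x * M)"
    using fin cube_set_sets[of Q0] by (intro integrable_mult_left integrable_real_indicator) auto
  have i2: "AE x in lborel. norm (f x) \<le> norm (indicator (cube_set Q0) x * M)"
    using assms(2) by eventually_elim (use assms(3) in \<open>auto simp: indicator_def\<close>)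
  show ?thesis by (rule Bochner_Integration.integrable_bound[OF i1 assms(1) i2])
qed

definition Neps :: "'n::finite itself \<Rightarrow> nat" where
  "Neps _ = card {\<epsilon>::'n \<Rightarrow> bool. \<epsilon> \<noteq> (\<lambda>_. False)}"

lemma haar_sq_bound:
  fixes f :: "real^'n::finite \<Rightarrow> real" and P :: "'n cube"
  assumes f: "integrable lborel f" and s: "snd P > 0"
  shows "haar_sq f P \<le> real (Neps TYPE('n)) * (\<integral>x. \<bar>f x\<bar> \<partial>lborel)^2 / snd P ^ CARD('n)"
proof -
  define c where "c = (snd P powr (-1/2)) ^ CARD('n)"
  have c2: "c^2 = 1 / snd P ^ CARD('n)"
  proof -
    have "(snd P powr (-1/2))^2 = snd P powr (-1/2) * snd P powr (-1/2)" by (simp add: power2_eq_square)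
    also have "\<dots> = snd P powr (-1)" by (simp add: powr_add[symmetric])
    also have "\<dots> = 1 / snd P" using s by (simp add: powr_minus_divide)
    finally have "(snd P powr (-1/2))^2 = 1 / snd P" .
    then have "((snd P powr (-1/2))^2)^CARD('n) = 1 / snd P ^ CARD('n)" by (simp add: power_one_over)
    moreover have "c^2 = ((snd P powr (-1/2))^2)^CARD('n)" unfolding c_def by (metis power_mult mult.commute)
    ultimately show ?thesis by simp
  qed
  have c0: "c \<ge> 0" unfolding c_def by simp
  have one: "(\<integral>x. f x * haar P \<epsilon> x \<partial>lborel)^2 \<le> 1 / snd P ^ CARD('n) * (\<integral>x. \<bar>f x\<bar> \<partial>lborel)^2" for \<epsilon>
  proof -
    have int2: "integrable lborel (\<lambda>x. \<bar>f x\<bar> * c)" using f by auto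
    have int1: "integrable lborel (\<lambda>x. f x * haar P \<epsilon> x)"
    proof (rule Bochner_Integration.integrable_bound[OF int2])
      show "(\<lambda>x. f x * haar P \<epsilon> x) \<in> borel_measurable lborel" using f by measurable
      show "AE x in lborel. norm (f x * haar P \<epsilon> x) \<le> norm (\<bar>f x\<bar> * c)"
        using haar_bound[OF s] c0 unfolding c_def by (auto simp: abs_mult intro!: mult_left_mono)
    qed
    have "\<bar>\<integral>x. f x * haar P \<epsilon> x \<partial>lborel\<bar> \<le> (\<integral>x. \<bar>f x\<bar> * c \<partial>lborel)"
      using int1 int2 haar_bound[OF s] c0 unfolding c_def
      by (intro integral_abs_bound_integral) (auto simp: abs_mult intro!: mult_left_mono)
    also have "\<dots> = c * (\<integral>x. \<bar>f x\<bar> \<partial>lborel)" by simp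
    finally have "\<bar>\<integral>x. f x * haar P \<epsilon> x \<partial>lborel\<bar>^2 \<le> (c * (\<integral>x. \<bar>f x\<bar> \<partial>lborel))^2"
      by (intro power_mono) auto
    then show ?thesis by (simp add: power_mult_distrib c2)
  qed
  have "haar_sq f P \<le> (\<Sum>\<epsilon>\<in>{\<epsilon>::'n \<Rightarrow> bool. \<epsilon> \<noteq> (\<lambda>_. False)}. 1 / snd P ^ CARD('n) * (\<integral>x. \<bar>f x\<bar> \<partial>lborel)^2)"
    unfolding haar_sq_def by (intro sum_mono one)
  also have "\<dots> = real (Neps TYPE('n)) * (\<integral>x. \<bar>f x\<bar> \<partial>lborel)^2 / snd P ^ CARD('n)"
    by (simp add: Neps_def)
  finally show ?thesis .
qed

lemma haar_sq_zero:
  fixes f :: "real^'n::finite \<Rightarrow> real" and P :: "'n cube"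
  assumes "snd P > 0" "cube_set P \<inter> cube_set Q0 = {}" "\<forall>x. x \<notin> cube_set Q0 \<longrightarrow> f x = 0"
  shows "haar_sq f P = 0"
proof -
  have "f x * haar P \<epsilon> x = 0" for x \<epsilon>
    using assms haar_zero[OF assms(1)] by (cases "x \<in> cube_set Q0") auto
  then have "(\<lambda>x. f x * haar P \<epsilon> x) = (\<lambda>x. 0)" for \<epsilon> by auto
  then show ?thesis unfolding haar_sq_def by simp
qed



definition phi :: "'n::finite cube \<Rightarrow> 'n cube \<Rightarrow> real" where
  "phi Q0 P = (if cube_set P \<inter> cube_set Q0 \<noteq> {} \<and> 2 * snd Q0 \<le> snd P then 1 / snd P ^ (2 * CARD('n)) else 0)"

definition psi :: "nat \<Rightarrow> 'n::finite cube \<Rightarrow> 'n cube \<Rightarrow> real" where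
  "psi j Q0 K = (if cube_set (triple K) \<inter> cube_set Q0 \<noteq> {} \<and> 2 * snd Q0 \<le> (1/2)^j * snd K
     then 2 ^ CARD('n) / ((1/2)^j * snd K) ^ (2 * CARD('n)) else 0)"

lemma half_pow_powr: "(1/2::real)^j * 2 powr (- real_of_int J) = 2 powr (- real_of_int (J + int j))"
proof -
  have "(1/2::real)^j = 2 powr (- real j)" by (simp add: powr_minus powr_realpow power_one_over inverse_eq_divide)
  then show ?thesis by (simp add: powr_add[symmetric] algebra_simps)
qed

lemma infsum_finite_support_bound:
  fixes h :: "'a \<Rightarrow> real"
  assumes "finite T" "card T \<le> N" "\<And>x. x \<notin> T \<Longrightarrow> h x = 0" "\<And>x. h x \<le> B" "B \<ge> 0"
  shows "infsum (\<lambda>x. ennreal (h x)) UNIV \<le> ennreal (real N * B)"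
proof -
  have "infsum (\<lambda>x. ennreal (h x)) UNIV \<le> infsum (\<lambda>x. ennreal B) T"
    by (rule infsum_mono_neutral[OF ennreal_summable_on ennreal_summable_on]) (simp_all add: assms ennreal_leI)
  also have "\<dots> = of_nat (card T) * ennreal B" using assms(1) by simp
  also have "\<dots> \<le> ennreal (real N * B)"
    using assms(2,5) by (simp add: ennreal_of_nat_eq_real_of_nat ennreal_mult[symmetric] ennreal_leI mult_right_mono)
  finally show ?thesis .
qed

lemma snd_cell[simp]: "snd (cell \<omega> J m) = 2 powr (- real_of_int J)"
  unfolding cell_def by simp

lemma inj_cell: "inj (cell \<omega> J)"
  using cell_inj[of \<omega>] unfolding inj_def by auto

lemma cell_side_eq:
  assumes "2 powr (- real_of_int J') = (2::real) powr (- real_of_int (J + int j))"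
  shows "J' = J + int j"
  using assms by (simp add: powr_inj)

lemma inner_sum:
  fixes Q0 :: "'n::finite cube" and K :: "'n cube"
  assumes K: "K \<in> dyadic_grid \<omega>" and s0: "snd Q0 > 0"
  shows "infsum (\<lambda>P. ennreal (phi Q0 P)) {P \<in> dyadic_grid \<omega>. cube_set P \<subseteq> cube_set (triple K) \<and> side P = (1/2)^j * side K}
          \<le> ennreal (psi j Q0 K)"
proof -
  obtain J m where Km: "K = cell \<omega> J m" using K by (auto simp: dyadic_grid_cell)
  define L where "L = (2::real) powr (- real_of_int (J + int j))"
  have L0: "L > 0" unfolding L_def by simp
  have sK: "(1/2)^j * snd K = L" unfolding Km L_def using half_pow_powr by simp
  define SK where "SK = {P \<in> dyadic_grid \<omega>. cube_set P \<subseteq> cube_set (triple K) \<and> side P = (1/2)^j * side K}"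
  have SKsub: "SK \<subseteq> range (cell \<omega> (J + int j))"
  proof
    fix P assume P: "P \<in> SK"
    then obtain J' m' where Pm: "P = cell \<omega> J' m'" unfolding SK_def by (auto simp: dyadic_grid_cell)
    have "2 powr (- real_of_int J') = L" using P sK unfolding SK_def side_def Pm by simp
    then have "J' = J + int j" unfolding L_def by (rule cell_side_eq)
    then show "P \<in> range (cell \<omega> (J + int j))" using Pm by auto
  qed
  have sideP: "snd P = L" if "P \<in> SK" for P using that sK unfolding SK_def side_def by auto
  have main: "infsum (\<lambda>P. ennreal (phi Q0 P)) SK \<le> ennreal (psi j Q0 K)"
  proof (cases "cube_set (triple K) \<inter> cube_set Q0 \<noteq> {} \<and> 2 * snd Q0 \<le> L")
    case False
    have "phi Q0 P = 0" if P: "P \<in> SK" for P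
    proof (rule ccontr)
      assume "phi Q0 P \<noteq> 0"
      then have "cube_set P \<inter> cube_set Q0 \<noteq> {}" "2 * snd Q0 \<le> snd P" unfolding phi_def by (auto split: if_splits)
      moreover have "cube_set P \<subseteq> cube_set (triple K)" using P unfolding SK_def by auto
      ultimately show False using False sideP[OF P] by blast
    qed
    then have "infsum (\<lambda>P. ennreal (phi Q0 P)) SK = 0" by (intro infsum_0) auto
    then show ?thesis by simp
  next
    case True
    have psiK: "psi j Q0 K = real (2 ^ CARD('n)) * (1 / L ^ (2 * CARD('n)))"
      using True sK unfolding psi_def by simp
    define Sm where "Sm = {m'::int^'n. \<exists>x::real^'n. (\<forall>i. grid_shift \<omega> (J + int j) $ i + L * of_int (m'$i) \<le> x$i \<and> x$i < grid_shift \<omega> (J + int j) $ i + L * of_int (m'$i) + L)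
                  \<and> (\<forall>i. fst Q0 $ i \<le> x$i \<and> x$i < fst Q0 $ i + snd Q0)}"
    have cnt: "finite Sm" "card Sm \<le> 2 ^ CARD('n)"
    proof -
      have "snd Q0 + L \<le> real 2 * L" using True s0 by simp
      note cc = count_cells[OF L0 this, where 'n='n, of "grid_shift \<omega> (J + int j)" "fst Q0"]
      show "finite Sm" using cc(1) unfolding Sm_def by simp
      show "card Sm \<le> 2 ^ CARD('n)" using cc(2) unfolding Sm_def by simp
    qed
    have "infsum (\<lambda>P. ennreal (phi Q0 P)) SK \<le> infsum (\<lambda>P. ennreal (phi Q0 P)) (range (cell \<omega> (J + int j)))"
      by (rule infsum_mono_neutral[OF ennreal_summable_on ennreal_summable_on]) (use SKsub in auto)
    also have "\<dots> = infsum (\<lambda>m'. ennreal (phi Q0 (cell \<omega> (J + int j) m'))) UNIV"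
      by (subst infsum_reindex[OF inj_cell]) (simp add: comp_def)
    also have "\<dots> \<le> ennreal (real (2 ^ CARD('n)) * (1 / L ^ (2 * CARD('n))))"
    proof (rule infsum_finite_support_bound[OF cnt])
      show "phi Q0 (cell \<omega> (J + int j) m') = 0" if "m' \<notin> Sm" for m'
      proof -
        have "cube_set (cell \<omega> (J + int j) m') \<inter> cube_set Q0 = {}"
        proof (rule ccontr)
          assume "cube_set (cell \<omega> (J + int j) m') \<inter> cube_set Q0 \<noteq> {}"
          then obtain x where x: "x \<in> cube_set (cell \<omega> (J + int j) m')" "x \<in> cube_set Q0" by blast
          have "m' \<in> Sm" unfolding Sm_def
            using x(1)[unfolded cube_set_cell] x(2)[unfolded cube_set_def]
            by (intro CollectI exI[of _ x]) (auto simp: L_def algebra_simps)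
          with that show False by simp
        qed
        then show ?thesis unfolding phi_def by simp
      qed
      show "phi Q0 (cell \<omega> (J + int j) m') \<le> 1 / L ^ (2 * CARD('n))" for m'
        unfolding phi_def L_def by simp
      show "0 \<le> 1 / L ^ (2 * CARD('n))" using L0 by simp
    qed
    finally show ?thesis using psiK by simp
  qed
  then show ?thesis unfolding SK_def .
qed



lemma geom_real_bound:
  fixes J0 :: int and j :: nat and s0 :: real and d :: nat
  assumes s0: "s0 = 2 powr (- real_of_int J0)" and d: "d \<ge> 1" and F: "finite F"
  defines "\<rho> \<equiv> \<lambda>J::int. if J + int j \<le> J0 - 1 then 8^d / (2 powr (- real_of_int (J + int j))) ^ (2*d) else 0"
  shows "sum \<rho> F \<le> 2 * (8^d / s0 ^ (2*d))"
proof -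
  define c where "c = 8^d / s0 ^ (2*d)"
  have s0p: "s0 > 0" using s0 by simp
  have c0: "c \<ge> 0" unfolding c_def using s0p by simp
  define A where "A = {J. J + int j \<le> J0 - 1}"
  define h where "h J = nat (J0 - 1 - J - int j)" for J
  have rho_le: "\<rho> J \<le> c * (1/2)^(h J)" if "J \<in> A" for J
  proof -
    have k: "J + int j = J0 - 1 - int (h J)" using that unfolding A_def h_def by simp
    have "2 powr (- real_of_int (J + int j)) = s0 * 2 powr (real (h J + 1))"
      unfolding k s0 by (simp add: powr_add[symmetric] algebra_simps)
    also have "2 powr (real (h J + 1)) = (2::real) ^ (h J + 1)" by (rule powr_realpow) simp
    finally have L: "2 powr (- real_of_int (J + int j)) = s0 * 2 ^ (h J + 1)" .
    have "(2::real) ^ h J \<le> 2 ^ ((h J + 1) * (2 * d))"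
      using d mult_le_mono2[of 1 "2*d" "h J + 1"] by (intro power_increasing) auto
    also have "\<dots> = (2 ^ (h J + 1)) ^ (2 * d)" by (rule power_mult)
    finally have pw: "(2::real) ^ h J \<le> (2 ^ (h J + 1)) ^ (2 * d)" .
    have "\<rho> J = 8^d / (s0 ^ (2*d) * (2 ^ (h J + 1)) ^ (2 * d))"
      using that unfolding \<rho>_def A_def L by (simp add: power_mult_distrib)
    also have "\<dots> \<le> 8^d / (s0 ^ (2*d) * 2 ^ h J)"
      using pw s0p by (intro divide_left_mono mult_left_mono) auto
    also have "\<dots> = c * (1/2)^(h J)" unfolding c_def by (simp add: power_one_over)
    finally show ?thesis .
  qed
  have "sum \<rho> F = sum \<rho> (F \<inter> A)"
    by (rule sum.mono_neutral_right) (use F in \<open>auto simp: \<rho>_def A_def\<close>)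
  also have "\<dots> \<le> sum (\<lambda>J. c * (1/2)^(h J)) (F \<inter> A)"
    by (rule sum_mono) (use rho_le in auto)
  also have "\<dots> = sum (\<lambda>k. c * (1/2)^k) (h ` (F \<inter> A))"
  proof -
    have "inj_on h (F \<inter> A)" unfolding inj_on_def h_def A_def by auto
    then show ?thesis by (simp add: sum.reindex)
  qed
  also have "\<dots> \<le> (\<Sum>k. c * (1/2)^k)"
  proof (cases "finite (h ` (F \<inter> A))")
    case True
    show ?thesis
      by (rule sum_le_suminf) (use True c0 in \<open>auto intro!: summable_mult summable_geometric\<close>)
  next
    case False
    have "summable (\<lambda>k. c * (1/2::real)^k)" by (intro summable_mult summable_geometric) auto
    then show ?thesis using False c0 by (simp add: suminf_nonneg)
  qed
  also have "\<dots> = 2 * c"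
  proof -
    have "(\<lambda>k. c * (1/2::real)^k) sums (c * (1 / (1 - 1/2)))"
      by (intro sums_mult geometric_sums) auto
    then show ?thesis by (simp add: sums_unique[symmetric])
  qed
  finally show ?thesis unfolding c_def .
qed

lemma outer_sum:
  fixes Q0 :: "'n::finite cube"
  assumes Q0: "Q0 = cell \<omega> J0 m0"
  shows "infsum (\<lambda>K. ennreal (psi j Q0 K)) (dyadic_grid \<omega>) \<le> ennreal (2 * (8^CARD('n) / (snd Q0) ^ (2*CARD('n))))"
proof -
  define d where "d = CARD('n)"
  define s0 where "s0 = snd Q0"
  have s0J: "s0 = 2 powr (- real_of_int J0)" unfolding s0_def Q0 by simp
  have s0p: "s0 > 0" unfolding s0J by simp
  define \<rho> where "\<rho> = (\<lambda>J::int. if J + int j \<le> J0 - 1 then 8^d / (2 powr (- real_of_int (J + int j))) ^ (2*d) else (0::real))"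
  have perJ: "infsum (\<lambda>m. ennreal (psi j Q0 (cell \<omega> J m))) UNIV \<le> ennreal (\<rho> J)" for J
  proof -
    define S where "S = (2::real) powr (- real_of_int J)"
    define L where "L = (2::real) powr (- real_of_int (J + int j))"
    have S0: "S > 0" unfolding S_def by simp
    have L0: "L > 0" unfolding L_def by simp
    have LS: "(1/2)^j * S = L" unfolding S_def L_def by (rule half_pow_powr)
    have psi_eq: "psi j Q0 (cell \<omega> J m) = (if cube_set (triple (cell \<omega> J m)) \<inter> cube_set Q0 \<noteq> {} \<and> 2 * s0 \<le> L
        then 2 ^ d / L ^ (2 * d) else 0)" for m
      unfolding psi_def s0_def d_def using LS by (simp add: S_def)
    show ?thesis
    proof (cases "J + int j \<le> J0 - 1")
      case False
      have "L \<le> s0" unfolding L_def s0J using False by simp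
      then have "psi j Q0 (cell \<omega> J m) = 0" for m using s0p unfolding psi_eq by auto
      then show ?thesis by (simp add: infsum_0)
    next
      case True
      have "L \<ge> 2 * s0"
      proof -
        have "2 * s0 = 2 powr (- real_of_int (J0 - 1))" unfolding s0J by (simp add: powr_diff powr_minus divide_inverse)
        also have "\<dots> \<le> L" unfolding L_def using True by simp
        finally show ?thesis .
      qed
      moreover have "L \<le> S"
      proof -
        have "(1/2::real)^j \<le> 1" by (rule power_le_one) auto
        then have "(1/2)^j * S \<le> 1 * S" using S0 by (intro mult_right_mono) auto
        then show ?thesis using LS by simp
      qed
      ultimately have N4: "s0 + 3 * S \<le> real 4 * S" using s0p by simp
      define T where "T = {m::int^'n. \<exists>x::real^'n. (\<forall>i. (grid_shift \<omega> J - (\<chi> i. S)) $ i + S * of_int (m$i) \<le> x$i \<and> x$i < (grid_shift \<omega> J - (\<chi> i. S)) $ i + S * of_int (m$i) + 3 * S)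
                  \<and> (\<forall>i. fst Q0 $ i \<le> x$i \<and> x$i < fst Q0 $ i + s0)}"
      note cc = count_cells[OF S0 N4, where 'n='n, of "grid_shift \<omega> J - (\<chi> i. S)" "fst Q0"]
      have Tfin: "finite T" using cc(1) unfolding T_def by simp
      have Tcard: "card T \<le> (4^d)" using cc(2) unfolding T_def d_def by (simp add: power_mult[symmetric])
      have "infsum (\<lambda>m. ennreal (psi j Q0 (cell \<omega> J m))) UNIV \<le> ennreal (real (4^d) * (2 ^ d / L ^ (2 * d)))"
      proof (rule infsum_finite_support_bound[OF Tfin Tcard])
        show "psi j Q0 (cell \<omega> J m) = 0" if "m \<notin> T" for m
        proof -
          have "cube_set (triple (cell \<omega> J m)) \<inter> cube_set Q0 = {}"
          proof (rule ccontr)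
            assume "cube_set (triple (cell \<omega> J m)) \<inter> cube_set Q0 \<noteq> {}"
            then obtain x where x: "x \<in> cube_set (triple (cell \<omega> J m))" "x \<in> cube_set Q0" by blast
            have "m \<in> T" unfolding T_def
              using x(1)[unfolded cube_set_def triple_def cell_def] x(2)[unfolded cube_set_def]
              by (intro CollectI exI[of _ x]) (auto simp: S_def s0_def algebra_simps)
            with that show False by simp
          qed
          then show ?thesis unfolding psi_eq by simp
        qed
        show "psi j Q0 (cell \<omega> J m) \<le> 2 ^ d / L ^ (2 * d)" for m unfolding psi_eq by simp
        show "0 \<le> 2 ^ d / L ^ (2 * d)" using L0 by simp
      qed
      also have "real (4^d) * (2 ^ d / L ^ (2 * d)) = \<rho> J"
        unfolding \<rho>_def L_def using True by (simp add: power_mult_distrib[symmetric])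
      finally show ?thesis .
    qed
  qed
  define f where "f = (\<lambda>(J, m). ennreal (psi j Q0 (cell \<omega> J m)))"
  have "infsum (\<lambda>K. ennreal (psi j Q0 K)) (dyadic_grid \<omega>) = infsum f UNIV"
    unfolding dyadic_grid_cell f_def by (subst infsum_reindex[OF cell_inj]) (simp add: comp_def case_prod_unfold)
  also have "\<dots> \<le> infsum (\<lambda>J. infsum (\<lambda>m. f (J, m)) UNIV) UNIV"
    by (rule infsum_prod_le)
  also have "\<dots> \<le> infsum (\<lambda>J. ennreal (\<rho> J)) UNIV"
    by (rule infsum_mono[OF ennreal_summable_on ennreal_summable_on]) (use perJ in \<open>simp add: f_def\<close>)
  also have "\<dots> \<le> ennreal (2 * (8^d / s0 ^ (2*d)))"
  proof -
    have "infsum (\<lambda>J. ennreal (\<rho> J)) UNIV = (SUP F\<in>{F. finite F \<and> F \<subseteq> UNIV}. sum (\<lambda>J. ennreal (\<rho> J)) F)"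
      by (rule nonneg_infsum_complete) simp
    also have "\<dots> \<le> ennreal (2 * (8^d / s0 ^ (2*d)))"
    proof (rule SUP_least)
      fix F :: "int set" assume F: "F \<in> {F. finite F \<and> F \<subseteq> UNIV}"
      have "sum (\<lambda>J. ennreal (\<rho> J)) F = ennreal (sum \<rho> F)"
        by (rule sum_ennreal) (auto simp: \<rho>_def)
      also have "\<dots> \<le> ennreal (2 * (8^d / s0 ^ (2*d)))"
      proof (rule ennreal_leI)
        have "d \<ge> 1" unfolding d_def by (simp add: Suc_le_eq)
        then show "sum \<rho> F \<le> 2 * (8^d / s0 ^ (2*d))"
          unfolding \<rho>_def using F by (intro geom_real_bound[OF s0J]) auto
      qed
      finally show "sum (\<lambda>J. ennreal (\<rho> J)) F \<le> ennreal (2 * (8^d / s0 ^ (2*d)))" .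
    qed
    finally show ?thesis .
  qed
  finally show ?thesis unfolding d_def s0_def .
qed



lemma ennreal_div_as_mult: "v > 0 \<Longrightarrow> (a::ennreal) / ennreal v = a * ennreal (1 / v)"
  by (simp add: divide_ennreal_def inverse_ennreal inverse_eq_divide)

lemma avg_abs_le:
  fixes g :: "real^'n::finite \<Rightarrow> real"
  assumes "snd Q > 0"
  shows "avg_abs g Q \<le> (\<integral>\<^sup>+ x. ennreal \<bar>g x\<bar> \<partial>lborel) * ennreal (1 / snd Q ^ CARD('n))"
proof -
  have "(\<integral>\<^sup>+ x\<in>cube_set Q. ennreal \<bar>g x\<bar> \<partial>lborel) \<le> (\<integral>\<^sup>+ x. ennreal \<bar>g x\<bar> \<partial>lborel)"
    by (intro nn_integral_mono) (auto simp: indicator_def)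
  then have "avg_abs g Q \<le> (\<integral>\<^sup>+ x. ennreal \<bar>g x\<bar> \<partial>lborel) / ennreal (vol Q)"
    unfolding avg_abs_def by (rule divide_right_mono_ennreal)
  also have "\<dots> = (\<integral>\<^sup>+ x. ennreal \<bar>g x\<bar> \<partial>lborel) * ennreal (1 / snd Q ^ CARD('n))"
    unfolding vol_def using assms by (simp add: ennreal_div_as_mult)
  finally show ?thesis .
qed

lemma term_bound:
  fixes f g :: "real^'n::finite \<Rightarrow> real" and Q0 K P :: "'n cube"
  assumes Q0: "Q0 = cell \<omega> J0 m0" and K: "K \<in> dyadic_grid \<omega>" and P: "P \<in> dyadic_grid \<omega>"
    and sub: "cube_set P \<subseteq> cube_set (triple K)" and side: "snd P = (1/2)^j * snd K"
    and fint: "integrable lborel f" and fsupp: "\<forall>x. x \<notin> cube_set Q0 \<longrightarrow> f x = 0"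
  shows "avg_abs g (triple K) * (ennreal (haar_sq f P / vol P) * emeasure lborel (cube_set P - cube_set Q0))
        \<le> (\<integral>\<^sup>+ x. ennreal \<bar>g x\<bar> \<partial>lborel) *
           ennreal (real (Neps TYPE('n)) * (\<integral>x. \<bar>f x\<bar> \<partial>lborel)^2 / (3^CARD('n) * 2^(j*CARD('n)))) * ennreal (phi Q0 P)"
proof -
  define d where "d = CARD('n)"
  define Gt where "Gt = (\<integral>\<^sup>+ x. ennreal \<bar>g x\<bar> \<partial>lborel)"
  define Ft where "Ft = (\<integral>x. \<bar>f x\<bar> \<partial>lborel)"
  define Ne where "Ne = real (Neps TYPE('n))"
  define sP where "sP = snd P"
  define sK where "sK = snd K"
  obtain J m where Km: "K = cell \<omega> J m" using K by (auto simp: dyadic_grid_cell)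
  obtain J' m' where Pm: "P = cell \<omega> J' m'" using P by (auto simp: dyadic_grid_cell)
  have sK0: "sK > 0" unfolding sK_def Km by simp
  have sP0: "sP > 0" unfolding sP_def Pm by simp
  have sKP: "sK = 2^j * sP" unfolding sP_def sK_def side by (simp add: power_one_over)
  have s0: "snd Q0 = 2 powr (- real_of_int J0)" unfolding Q0 by simp
  have Ft0: "Ft \<ge> 0" unfolding Ft_def by simp
  have Ne0: "Ne \<ge> 0" unfolding Ne_def by simp
  have aK: "avg_abs g (triple K) \<le> Gt * ennreal (1 / (3 * sK) ^ d)"
    using avg_abs_le[of "triple K" g] sK0 unfolding Gt_def d_def sK_def triple_def by simp
  have bP: "ennreal (haar_sq f P / vol P) \<le> ennreal (Ne * Ft^2 / sP ^ d / sP ^ d)"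
    using haar_sq_bound[OF fint, of P] sP0 unfolding Ne_def Ft_def sP_def d_def vol_def
    by (intro ennreal_leI divide_right_mono) auto
  show ?thesis
  proof (cases "cube_set P \<inter> cube_set Q0 = {}")
    case True
    then have "haar_sq f P = 0" using haar_sq_zero[of P Q0 f] sP0 fsupp unfolding sP_def by simp
    then show ?thesis by simp
  next
    case inter: False
    show ?thesis
    proof (cases "sP \<le> snd Q0")
      case True
      have "J0 \<le> J'" using True unfolding sP_def Pm s0 by simp
      from cell_nested[OF this] inter have "cube_set P \<subseteq> cube_set Q0" unfolding Pm Q0 by blast
      then have "cube_set P - cube_set Q0 = {}" by blast
      then have "emeasure lborel (cube_set P - cube_set Q0) = 0" by (metis emeasure_empty)
      then show ?thesis by simp
    next
      case False
      have "J' < J0" using False unfolding sP_def Pm s0 by simp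
      then have "J' \<le> J0 - 1" by simp
      then have "2 powr (- real_of_int (J0 - 1)) \<le> sP" unfolding sP_def Pm by simp
      moreover have "2 powr (- real_of_int (J0 - 1)) = 2 * snd Q0"
        unfolding s0 by (simp add: powr_diff powr_minus divide_inverse)
      ultimately have "2 * snd Q0 \<le> sP" by simp
      then have phiP: "phi Q0 P = 1 / sP ^ (2 * d)" using inter unfolding phi_def sP_def d_def by auto
      have mu: "emeasure lborel (cube_set P - cube_set Q0) \<le> ennreal (sP ^ d)"
        using emeasure_mono[of "cube_set P - cube_set Q0" "cube_set P" lborel] emeasure_cube_le[of P] sP0 cube_set_sets[of P]
        unfolding sP_def d_def by (auto intro: order.trans)
      have "avg_abs g (triple K) * (ennreal (haar_sq f P / vol P) * emeasure lborel (cube_set P - cube_set Q0))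
          \<le> (Gt * ennreal (1 / (3 * sK) ^ d)) * (ennreal (Ne * Ft^2 / sP ^ d / sP ^ d) * ennreal (sP ^ d))"
        by (intro mult_mono aK bP mu) auto
      also have "\<dots> = Gt * ennreal (1 / (3 * sK) ^ d * (Ne * Ft^2 / sP ^ d / sP ^ d * sP ^ d))"
      proof -
        have e1: "ennreal (Ne * Ft^2 / sP ^ d / sP ^ d) * ennreal (sP ^ d) = ennreal (Ne * Ft^2 / sP ^ d / sP ^ d * sP ^ d)"
          by (rule ennreal_mult[symmetric]) (use Ne0 Ft0 sP0 in auto)
        have e2: "ennreal (1 / (3 * sK) ^ d) * ennreal (Ne * Ft^2 / sP ^ d / sP ^ d * sP ^ d) = ennreal (1 / (3 * sK) ^ d * (Ne * Ft^2 / sP ^ d / sP ^ d * sP ^ d))"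
          by (rule ennreal_mult[symmetric]) (use Ne0 Ft0 sP0 sK0 in auto)
        show ?thesis by (simp only: e1 e2 mult.assoc)
      qed
      also have "1 / (3 * sK) ^ d * (Ne * Ft^2 / sP ^ d / sP ^ d * sP ^ d) = Ne * Ft^2 / (3^d * 2^(j*d)) * phi Q0 P"
      proof -
        have "(3 * sK) ^ d = 3^d * 2^(j*d) * sP^d" unfolding sKP by (simp add: power_mult_distrib power_mult)
        moreover have "sP ^ (2*d) = sP^d * sP^d" by (simp add: mult_2 power_add)
        ultimately show ?thesis unfolding phiP using sP0 by (simp add: field_simps)
      qed
      also have "Gt * ennreal (Ne * Ft^2 / (3^d * 2^(j*d)) * phi Q0 P) = Gt * ennreal (Ne * Ft^2 / (3^d * 2^(j*d))) * ennreal (phi Q0 P)"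
        by (subst ennreal_mult) (use Ne0 Ft0 sP0 in \<open>auto simp: mult.assoc phiP\<close>)
      finally show ?thesis unfolding Gt_def Ne_def Ft_def d_def .
    qed
  qed
qed



definition Cst :: "'n::finite itself \<Rightarrow> real" where
  "Cst T = 2 * real (Neps T) * 8^CARD('n) + 1"

lemma double_sum:
  fixes Q0 :: "'n::finite cube"
  assumes Q0: "Q0 = cell \<omega> J0 m0"
  shows "infsum (\<lambda>K. infsum (\<lambda>P. ennreal (phi Q0 P))
            {P \<in> dyadic_grid \<omega>. cube_set P \<subseteq> cube_set (triple K) \<and> side P = (1/2)^j * side K}) (dyadic_grid \<omega>)
         \<le> ennreal (2 * (8^CARD('n) / (snd Q0) ^ (2*CARD('n))))"
proof -
  have s0: "snd Q0 > 0" unfolding Q0 by simp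
  have "infsum (\<lambda>K. infsum (\<lambda>P. ennreal (phi Q0 P))
            {P \<in> dyadic_grid \<omega>. cube_set P \<subseteq> cube_set (triple K) \<and> side P = (1/2)^j * side K}) (dyadic_grid \<omega>)
        \<le> infsum (\<lambda>K. ennreal (psi j Q0 K)) (dyadic_grid \<omega>)"
    by (rule infsum_mono[OF ennreal_summable_on ennreal_summable_on]) (rule inner_sum[OF _ s0])
  also have "\<dots> \<le> ennreal (2 * (8^CARD('n) / (snd Q0) ^ (2*CARD('n))))"
    by (rule outer_sum[OF Q0])
  finally show ?thesis .
qed

lemma main_bound:
  fixes \<omega> :: "int \<Rightarrow> 'n::finite \<Rightarrow> bool" and j :: nat and Q0 :: "'n cube"
    and f g :: "real^'n \<Rightarrow> real"
  assumes Q0g: "Q0 \<in> dyadic_grid \<omega>"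
    and fmeas: "f \<in> borel_measurable lborel" and gmeas: "g \<in> borel_measurable lborel"
    and fb: "AE x in lborel. \<bar>f x\<bar> \<le> M"
    and fsupp: "\<forall>x. x \<notin> cube_set Q0 \<longrightarrow> f x = 0" and gsupp: "\<forall>x. x \<notin> cube_set Q0 \<longrightarrow> g x = 0"
  shows "B_out \<omega> j Q0 g f \<le>
       ennreal (Cst TYPE('n) * (1/2) ^ (j * CARD('n))) * avg_abs g Q0 * (avg_abs f Q0)^2 * ennreal (vol Q0)"
proof -
  define d where "d = CARD('n)"
  obtain J0 m0 where Q0: "Q0 = cell \<omega> J0 m0" using Q0g by (auto simp: dyadic_grid_cell)
  define s0 where "s0 = snd Q0"
  have s0p: "s0 > 0" unfolding s0_def Q0 by simp
  have fint: "integrable lborel f" using bounded_supp_integrable[OF fmeas fb fsupp] s0p unfolding s0_def by simp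
  define Gt where "Gt = (\<integral>\<^sup>+ x. ennreal \<bar>g x\<bar> \<partial>lborel)"
  define Ft where "Ft = (\<integral>x. \<bar>f x\<bar> \<partial>lborel)"
  define Ne where "Ne = real (Neps TYPE('n))"
  define X where "X = Ne * Ft^2 / (3^d * 2^(j*d))"
  have Ft0: "Ft \<ge> 0" unfolding Ft_def by simp
  have Ne0: "Ne \<ge> 0" unfolding Ne_def by simp
  have X0: "X \<ge> 0" unfolding X_def using Ft0 Ne0 by simp
  have cg: "countable (dyadic_grid \<omega>)" unfolding dyadic_grid_cell by simp
  define a where "a K = avg_abs g (triple K)" for K
  define SK where "SK K = {P \<in> dyadic_grid \<omega>. cube_set P \<subseteq> cube_set (triple K) \<and> side P = (1/2)^j * side K}" for K
  define b where "b P = ennreal (haar_sq f P / vol P)" for P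
  have cSK: "countable (SK K)" for K using cg unfolding SK_def by (rule countable_subset[rotated]) auto
  define G where "G K x = infsum (\<lambda>P. b P * indicator (cube_set P - cube_set Q0) x) (SK K)" for K x
  have Gmeas: "G K \<in> borel_measurable lborel" for K
    unfolding G_def by (rule nn_integral_infsum(1)[OF cSK]) measurable
  have Gint: "(\<integral>\<^sup>+ x. G K x \<partial>lborel) = infsum (\<lambda>P. b P * emeasure lborel (cube_set P - cube_set Q0)) (SK K)" for K
  proof -
    have "(\<integral>\<^sup>+ x. G K x \<partial>lborel) = infsum (\<lambda>P. \<integral>\<^sup>+ x. b P * indicator (cube_set P - cube_set Q0) x \<partial>lborel) (SK K)"
      unfolding G_def by (rule nn_integral_infsum(2)[OF cSK]) measurable
    also have "\<dots> = infsum (\<lambda>P. b P * emeasure lborel (cube_set P - cube_set Q0)) (SK K)"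
      by (intro infsum_cong nn_integral_cmult_indicator) measurable
    finally show ?thesis .
  qed
  have E1: "B_out \<omega> j Q0 g f = (\<integral>\<^sup>+ x. infsum (\<lambda>K. a K * G K x) (dyadic_grid \<omega>) \<partial>lborel)"
    unfolding B_out_def
  proof (intro nn_integral_cong)
    fix x
    show "infsum (\<lambda>K. avg_abs g (triple K) * infsum (\<lambda>P. ennreal (haar_sq f P / vol P) * indicator (cube_set P) x)
             {P \<in> dyadic_grid \<omega>. cube_set P \<subseteq> cube_set (triple K) \<and> side P = (1/2)^j * side K}) (dyadic_grid \<omega>)
          * indicator (UNIV - cube_set Q0) x = infsum (\<lambda>K. a K * G K x) (dyadic_grid \<omega>)"
      by (cases "x \<in> cube_set Q0") (simp_all add: a_def G_def b_def SK_def indicator_def)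
  qed
  also have "\<dots> = infsum (\<lambda>K. \<integral>\<^sup>+ x. a K * G K x \<partial>lborel) (dyadic_grid \<omega>)"
    by (rule nn_integral_infsum(2)[OF cg]) (use Gmeas in measurable)
  also have "\<dots> = infsum (\<lambda>K. a K * infsum (\<lambda>P. b P * emeasure lborel (cube_set P - cube_set Q0)) (SK K)) (dyadic_grid \<omega>)"
    by (intro infsum_cong) (simp add: nn_integral_cmult[OF Gmeas] Gint)
  also have "\<dots> \<le> infsum (\<lambda>K. Gt * ennreal X * infsum (\<lambda>P. ennreal (phi Q0 P)) (SK K)) (dyadic_grid \<omega>)"
  proof (rule infsum_mono[OF ennreal_summable_on ennreal_summable_on])
    fix K assume K: "K \<in> dyadic_grid \<omega>"
    have "a K * infsum (\<lambda>P. b P * emeasure lborel (cube_set P - cube_set Q0)) (SK K)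
        = infsum (\<lambda>P. a K * (b P * emeasure lborel (cube_set P - cube_set Q0))) (SK K)"
      by (rule infsum_cmult_ennreal[symmetric])
    also have "\<dots> \<le> infsum (\<lambda>P. Gt * ennreal X * ennreal (phi Q0 P)) (SK K)"
    proof (rule infsum_mono[OF ennreal_summable_on ennreal_summable_on])
      fix P assume P: "P \<in> SK K"
      show "a K * (b P * emeasure lborel (cube_set P - cube_set Q0)) \<le> Gt * ennreal X * ennreal (phi Q0 P)"
        unfolding a_def b_def Gt_def X_def Ne_def Ft_def d_def
        by (rule term_bound[OF Q0 K _ _ _ fint fsupp]) (use P in \<open>auto simp: SK_def side_def\<close>)
    qed
    also have "\<dots> = Gt * ennreal X * infsum (\<lambda>P. ennreal (phi Q0 P)) (SK K)"
      by (rule infsum_cmult_ennreal)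
    finally show "a K * infsum (\<lambda>P. b P * emeasure lborel (cube_set P - cube_set Q0)) (SK K)
        \<le> Gt * ennreal X * infsum (\<lambda>P. ennreal (phi Q0 P)) (SK K)" .
  qed
  also have "\<dots> = Gt * ennreal X * infsum (\<lambda>K. infsum (\<lambda>P. ennreal (phi Q0 P)) (SK K)) (dyadic_grid \<omega>)"
    by (rule infsum_cmult_ennreal)
  also have "\<dots> \<le> Gt * ennreal X * ennreal (2 * (8^d / s0 ^ (2*d)))"
  proof -
    have "infsum (\<lambda>K. infsum (\<lambda>P. ennreal (phi Q0 P)) (SK K)) (dyadic_grid \<omega>) \<le> ennreal (2 * (8^d / s0 ^ (2*d)))"
      unfolding SK_def d_def s0_def by (rule double_sum[OF Q0])
    then show ?thesis by (rule mult_left_mono) simp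
  qed
  also have "\<dots> \<le> ennreal (Cst TYPE('n) * (1/2) ^ (j * CARD('n))) * avg_abs g Q0 * (avg_abs f Q0)^2 * ennreal (vol Q0)"
  proof -
    have sd0: "s0 ^ d > 0" using s0p by simp
    have vol0: "vol Q0 = s0 ^ d" unfolding vol_def s0_def d_def ..
    have "(\<integral>\<^sup>+ x\<in>cube_set Q0. ennreal \<bar>g x\<bar> \<partial>lborel) = Gt"
      unfolding Gt_def by (intro nn_integral_cong) (use gsupp in \<open>auto simp: indicator_def\<close>)
    then have avg: "avg_abs g Q0 = Gt * ennreal (1 / s0 ^ d)"
      unfolding avg_abs_def vol0 using sd0 by (simp add: ennreal_div_as_mult)
    have "(\<integral>\<^sup>+ x\<in>cube_set Q0. ennreal \<bar>f x\<bar> \<partial>lborel) = (\<integral>\<^sup>+ x. ennreal \<bar>f x\<bar> \<partial>lborel)"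
      by (intro nn_integral_cong) (use fsupp in \<open>auto simp: indicator_def\<close>)
    also have "\<dots> = ennreal Ft" unfolding Ft_def
      by (rule nn_integral_eq_integral) (use fint in auto)
    finally have avf: "avg_abs f Q0 = ennreal (Ft / s0 ^ d)"
      unfolding avg_abs_def vol0 using sd0 Ft0 by (simp add: divide_ennreal)
    define R where "R = Cst TYPE('n) * (1/2) ^ (j * d) * (1 / s0 ^ d) * (Ft / s0 ^ d)^2 * s0 ^ d"
    have Cst0: "Cst TYPE('n) \<ge> 0" unfolding Cst_def by simp
    have RHS: "ennreal (Cst TYPE('n) * (1/2) ^ (j * CARD('n))) * avg_abs g Q0 * (avg_abs f Q0)^2 * ennreal (vol Q0)
        = Gt * ennreal R"
    proof -
      have "ennreal (Cst TYPE('n) * (1/2) ^ (j * CARD('n))) * avg_abs g Q0 * (avg_abs f Q0)^2 * ennreal (vol Q0)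
         = Gt * (ennreal (Cst TYPE('n) * (1/2) ^ (j * d)) * ennreal (1 / s0 ^ d) * ennreal ((Ft / s0 ^ d)^2) * ennreal (s0 ^ d))"
        unfolding avg avf vol0 d_def using Ft0 s0p by (simp add: ennreal_power mult_ac)
      also have "ennreal (Cst TYPE('n) * (1/2) ^ (j * d)) * ennreal (1 / s0 ^ d) * ennreal ((Ft / s0 ^ d)^2) * ennreal (s0 ^ d)
          = ennreal R"
        unfolding R_def using Cst0 s0p by (simp add: ennreal_mult[symmetric])
      finally show ?thesis .
    qed
    have LHS: "Gt * ennreal X * ennreal (2 * (8^d / s0 ^ (2*d))) = Gt * ennreal (X * (2 * (8^d / s0 ^ (2*d))))"
    proof -
      have "ennreal X * ennreal (2 * (8^d / s0 ^ (2*d))) = ennreal (X * (2 * (8^d / s0 ^ (2*d))))"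
        by (rule ennreal_mult[symmetric]) (use X0 s0p in auto)
      then show ?thesis by (simp only: mult.assoc)
    qed
    define Z where "Z = Ft^2 / (2^(j*d) * s0^(2*d))"
    have Z0: "Z \<ge> 0" unfolding Z_def using s0p by simp
    have s2: "s0^(2*d) = s0^d * s0^d" by (simp add: mult_2 power_add)
    have l: "X * (2 * (8^d / s0 ^ (2*d))) = (2 * Ne * 8^d / 3^d) * Z"
      unfolding X_def Z_def by (simp add: field_simps)
    have r: "R = Cst TYPE('n) * Z"
      unfolding R_def Z_def s2 using s0p by (simp add: field_simps power_one_over power2_eq_square)
    have "2 * Ne * 8^d / 3^d \<le> 2 * Ne * 8^d"
    proof -
      have "(1::real) \<le> 3^d" by (rule one_le_power) simp
      moreover have "0 \<le> 2 * Ne * 8^d" using Ne0 by simp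
      ultimately show ?thesis by (simp add: divide_le_eq mult_le_cancel_left1 mult_left_le)
    qed
    also have "\<dots> \<le> Cst TYPE('n)" unfolding Cst_def Ne_def d_def by simp
    finally have "X * (2 * (8^d / s0 ^ (2*d))) \<le> R" unfolding l r using Z0 by (intro mult_right_mono)
    then show ?thesis unfolding RHS LHS by (intro mult_left_mono ennreal_leI) auto
  qed
  finally show ?thesis .
qed


theorem lemma8p1:
  "\<exists>C>0. \<forall>(\<omega> :: int \<Rightarrow> 'n::finite \<Rightarrow> bool) (j::nat) Q0 (f :: real^'n \<Rightarrow> real) (g :: real^'n \<Rightarrow> real).
     Q0 \<in> dyadic_grid \<omega> \<longrightarrow>
     f \<in> borel_measurable lborel \<longrightarrow> g \<in> borel_measurable lborel \<longrightarrow>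
     (\<exists>M. AE x in lborel. \<bar>f x\<bar> \<le> M) \<longrightarrow> (\<exists>M. AE x in lborel. \<bar>g x\<bar> \<le> M) \<longrightarrow>
     (\<forall>x. x \<notin> cube_set Q0 \<longrightarrow> f x = 0) \<longrightarrow> (\<forall>x. x \<notin> cube_set Q0 \<longrightarrow> g x = 0) \<longrightarrow>
     B_out \<omega> j Q0 g f \<le>
       ennreal (C * (1/2) ^ (j * CARD('n))) * avg_abs g Q0 * (avg_abs f Q0)^2 * ennreal (vol Q0)"
proof (rule exI[of _ "Cst TYPE('n)"], intro conjI allI impI)
  show "Cst TYPE('n) > 0" unfolding Cst_def by (simp add: add_nonneg_pos)
next
  fix \<omega> :: "int \<Rightarrow> 'n::finite \<Rightarrow> bool" and j :: nat and Q0 :: "'n cube" and f g :: "real^'n \<Rightarrow> real"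
  assume Q0g: "Q0 \<in> dyadic_grid \<omega>"
    and fmeas: "f \<in> borel_measurable lborel" and gmeas: "g \<in> borel_measurable lborel"
    and fb: "\<exists>M. AE x in lborel. \<bar>f x\<bar> \<le> M" and gb: "\<exists>M. AE x in lborel. \<bar>g x\<bar> \<le> M"
    and fsupp: "\<forall>x. x \<notin> cube_set Q0 \<longrightarrow> f x = 0" and gsupp: "\<forall>x. x \<notin> cube_set Q0 \<longrightarrow> g x = 0"
  from fb obtain M where M: "AE x in lborel. \<bar>f x\<bar> \<le> M" by blast
  show "B_out \<omega> j Q0 g f \<le>
       ennreal (Cst TYPE('n) * (1/2) ^ (j * CARD('n))) * avg_abs g Q0 * (avg_abs f Q0)^2 * ennreal (vol Q0)"
    by (rule main_bound[OF Q0g fmeas gmeas M fsupp gsupp])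
qed

end
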